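(* Let $\mathscr{X}$ be a complex Banach space and $\mathcal{T}\subseteq\mathcal{B}(\mathscr{X})$ a non-empty set of operators. (i) For $\mathcal{A}=\mathrm{Alg}\,\mathrm{Lat}(\mathcal{T})$ we have $\mathrm{Col}(\mathcal{A})\subseteq\mathrm{Col}(\mathcal{A}\cap\mathcal{A}')$. (ii) If $\mathcal{T}'$ and $\mathcal{T}''$ are reflexive algebras, then $\mathrm{Col}(\mathcal{T}')=\mathrm{Col}(\mathcal{T}'')$.
   Context: $\mathcal{T}'$ is the commutant of $\mathcal{T}$ (operators commuting with all elements of $\mathcal{T}$) and $\mathcal{T}''=(\mathcal{T}')'$. $\mathrm{Lat}(\mathcal{T})$ is the set of closed subspaces invariant for all operators in $\mathcal{T}$; $\mathrm{Alg}(\mathfrak{F})$ is the set of operators leaving every subspace in $\mathfrak{F}$ invariant. A subalgebra $\mathcal{A}$ is reflexive if $\mathrm{Alg}\,\mathrm{Lat}(\mathcal{A})=\mathcal{A}$. For a set $\mathcal{S}$ of operators, $\mathrm{Col}(\mathcal{S})$ is the group of invertible $S\in\mathcal{B}(\mathscr{X})$ such that for every closed subspace $\mathscr{M}$: $\mathscr{M}\in\mathrm{Lat}(\mathcal{S})$ iff $S\mathscr{M}\in\mathrm{Lat}(\mathcal{S})$. *)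

theory Defs
  imports "HOL-Analysis.Analysis"
begin

class complex_banach = banach +
  fixes scaleC :: "complex \<Rightarrow> 'a \<Rightarrow> 'a"
  assumes scaleC_add_right: "scaleC c (x + y) = scaleC c x + scaleC c y"
    and scaleC_add_left: "scaleC (c + d) x = scaleC c x + scaleC d x"
    and scaleC_scaleC: "scaleC c (scaleC d x) = scaleC (c * d) x"
    and scaleC_one: "scaleC 1 x = x"
    and scaleC_of_real: "scaleC (complex_of_real r) x = scaleR r x"
    and norm_scaleC: "norm (scaleC c x) = cmod c * norm x"

definition BX :: "('a::complex_banach \<Rightarrow> 'a) set" where
  "BX = {T. bounded_linear T \<and> (\<forall>c x. T (scaleC c x) = scaleC c (T x))}"

definition closed_subspace :: "'a::complex_banach set \<Rightarrow> bool" where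
  "closed_subspace M \<longleftrightarrow> closed M \<and> 0 \<in> M \<and> (\<forall>x\<in>M. \<forall>y\<in>M. x + y \<in> M)
     \<and> (\<forall>c. \<forall>x\<in>M. scaleC c x \<in> M)"

definition Lat :: "('a::complex_banach \<Rightarrow> 'a) set \<Rightarrow> 'a set set" where
  "Lat \<T> = {M. closed_subspace M \<and> (\<forall>T\<in>\<T>. T ` M \<subseteq> M)}"

definition Alg :: "'a::complex_banach set set \<Rightarrow> ('a \<Rightarrow> 'a) set" where
  "Alg \<F> = {T \<in> BX. \<forall>M\<in>\<F>. T ` M \<subseteq> M}"

definition commutant :: "('a::complex_banach \<Rightarrow> 'a) set \<Rightarrow> ('a \<Rightarrow> 'a) set" where
  "commutant \<T> = {A \<in> BX. \<forall>T\<in>\<T>. A \<circ> T = T \<circ> A}"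

definition subalgebra :: "('a::complex_banach \<Rightarrow> 'a) set \<Rightarrow> bool" where
  "subalgebra \<A> \<longleftrightarrow> \<A> \<subseteq> BX \<and> (\<lambda>x. 0) \<in> \<A>
     \<and> (\<forall>S\<in>\<A>. \<forall>T\<in>\<A>. (\<lambda>x. S x + T x) \<in> \<A> \<and> S \<circ> T \<in> \<A>)
     \<and> (\<forall>c. \<forall>T\<in>\<A>. (\<lambda>x. scaleC c (T x)) \<in> \<A>)"

definition reflexive_algebra :: "('a::complex_banach \<Rightarrow> 'a) set \<Rightarrow> bool" where
  "reflexive_algebra \<A> \<longleftrightarrow> subalgebra \<A> \<and> Alg (Lat \<A>) = \<A>"

definition invertible_op :: "('a::complex_banach \<Rightarrow> 'a) \<Rightarrow> bool" where
  "invertible_op S \<longleftrightarrow> S \<in> BX \<and> (\<exists>R\<in>BX. S \<circ> R = id \<and> R \<circ> S = id)"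

definition Col :: "('a::complex_banach \<Rightarrow> 'a) set \<Rightarrow> ('a \<Rightarrow> 'a) set" where
  "Col \<S> = {S. invertible_op S \<and>
     (\<forall>M. closed_subspace M \<longrightarrow> (M \<in> Lat \<S> \<longleftrightarrow> S ` M \<in> Lat \<S>))}"

end

theory Submission
  imports Defs
begin

lemma BX_comp: "S \<in> BX \<Longrightarrow> T \<in> BX \<Longrightarrow> S \<circ> T \<in> BX"
  unfolding BX_def o_def by (auto intro: bounded_linear_compose)

lemma BX_lin:
  assumes "S \<in> BX"
  shows "S 0 = 0" "S (x + y) = S x + S y" "S (scaleC c x) = scaleC c (S x)"
    "continuous (at z) S"
proof -
  have bl: "bounded_linear S" using assms unfolding BX_def by auto
  show "S 0 = 0" using bl by (simp add: bounded_linear.linear linear_0)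
  show "S (x + y) = S x + S y" using bl by (simp add: bounded_linear.linear linear_add)
  show "S (scaleC c x) = scaleC c (S x)" using assms unfolding BX_def by auto
  show "continuous (at z) S" using bl by (simp add: bounded_linear.continuous[OF bl] continuous_ident)
qed

lemma inv_data:
  assumes "invertible_op S"
  obtains R where "S \<in> BX" "R \<in> BX" "\<And>x. S (R x) = x" "\<And>x. R (S x) = x"
proof -
  from assms obtain R where "S \<in> BX" "R \<in> BX" "S \<circ> R = id" "R \<circ> S = id"
    unfolding invertible_op_def by auto
  then show ?thesis using that by (metis comp_apply id_apply)
qed

lemma cs_image:
  assumes S: "S \<in> BX" and R: "R \<in> BX" and SR: "\<And>x. S (R x) = x" and RS: "\<And>x. R (S x) = x"
    and M: "closed_subspace M"
  shows "closed_subspace (S ` M)"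
proof -
  have eq: "S ` M = R -` M"
  proof
    show "S ` M \<subseteq> R -` M" using RS by auto
    show "R -` M \<subseteq> S ` M"
    proof
      fix y assume "y \<in> R -` M"
      then have "R y \<in> M" by auto
      then show "y \<in> S ` M" using SR[of y] by (metis image_eqI)
    qed
  qed
  have "closed (R -` M)"
    using M unfolding closed_subspace_def
    by (intro continuous_closed_vimage) (auto intro: BX_lin(4)[OF R])
  moreover have "0 \<in> S ` M" using M BX_lin(1)[OF S] unfolding closed_subspace_def
    by (metis image_eqI)
  moreover have "\<forall>x\<in>S ` M. \<forall>y\<in>S ` M. x + y \<in> S ` M"
  proof (intro ballI)
    fix x y assume "x \<in> S ` M" "y \<in> S ` M"
    then obtain a b where "a \<in> M" "b \<in> M" "x = S a" "y = S b" by auto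
    then have "x + y = S (a + b)" "a + b \<in> M" using BX_lin(2)[OF S] M unfolding closed_subspace_def by auto
    then show "x + y \<in> S ` M" by auto
  qed
  moreover have "\<forall>c. \<forall>x\<in>S ` M. scaleC c x \<in> S ` M"
    using M BX_lin(3)[OF S] unfolding closed_subspace_def by (metis imageE image_eqI)
  ultimately show ?thesis unfolding closed_subspace_def eq by auto
qed

definition conj_pres :: "('a::complex_banach \<Rightarrow> 'a) set \<Rightarrow> ('a \<Rightarrow> 'a) \<Rightarrow> ('a \<Rightarrow> 'a) \<Rightarrow> bool" where
  "conj_pres U S R \<longleftrightarrow> (\<forall>X\<in>U. S \<circ> X \<circ> R \<in> U \<and> R \<circ> X \<circ> S \<in> U)"

lemma conj_col:
  assumes inv: "invertible_op S" and S: "S \<in> BX" and R: "R \<in> BX"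
    and SR: "\<And>x. S (R x) = x" and RS: "\<And>x. R (S x) = x"
    and cp: "conj_pres U S R"
  shows "S \<in> Col U"
  unfolding Col_def
proof (intro CollectI conjI allI impI inv)
  fix M :: "'a set" assume M: "closed_subspace M"
  have SM: "closed_subspace (S ` M)" by (rule cs_image[OF S R SR RS M])
  show "M \<in> Lat U \<longleftrightarrow> S ` M \<in> Lat U"
  proof
    assume "M \<in> Lat U"
    then have inv1: "\<And>X. X \<in> U \<Longrightarrow> X ` M \<subseteq> M" unfolding Lat_def by auto
    have "X ` (S ` M) \<subseteq> S ` M" if X: "X \<in> U" for X
    proof
      fix y assume "y \<in> X ` (S ` M)"
      then obtain x where x: "x \<in> M" "y = X (S x)" by auto
      have "(R \<circ> X \<circ> S) x \<in> M" using inv1[of "R \<circ> X \<circ> S"] cp X x unfolding conj_pres_def by auto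
      then have "R (X (S x)) \<in> M" by simp
      then show "y \<in> S ` M" using x SR by (metis image_eqI)
    qed
    then show "S ` M \<in> Lat U" using SM unfolding Lat_def by auto
  next
    assume "S ` M \<in> Lat U"
    then have inv1: "\<And>X. X \<in> U \<Longrightarrow> X ` (S ` M) \<subseteq> S ` M" unfolding Lat_def by auto
    have "X ` M \<subseteq> M" if X: "X \<in> U" for X
    proof
      fix y assume "y \<in> X ` M"
      then obtain x where x: "x \<in> M" "y = X x" by auto
      have "(S \<circ> X \<circ> R) (S x) \<in> S ` M" using inv1[of "S \<circ> X \<circ> R"] cp X x unfolding conj_pres_def by auto
      then have "S (X x) \<in> S ` M" using RS by simp
      then obtain z where "z \<in> M" "S (X x) = S z" by auto
      then have "X x = z" using RS by metis
      then show "y \<in> M" using x \<open>z \<in> M\<close> by simp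
    qed
    then show "M \<in> Lat U" using M unfolding Lat_def by auto
  qed
qed

lemma col_conj:
  assumes refl: "Alg (Lat A) = A" and col: "S \<in> Col A"
    and S: "S \<in> BX" and R: "R \<in> BX"
    and SR: "\<And>x. S (R x) = x" and RS: "\<And>x. R (S x) = x"
  shows "conj_pres A S R"
  unfolding conj_pres_def
proof (intro ballI conjI)
  have colM: "\<And>M. closed_subspace M \<Longrightarrow> M \<in> Lat A \<longleftrightarrow> S ` M \<in> Lat A"
    using col unfolding Col_def by auto
  have AB: "A \<subseteq> BX" using refl unfolding Alg_def by auto
  fix X assume X: "X \<in> A"
  have XA: "\<And>M. M \<in> Lat A \<Longrightarrow> X ` M \<subseteq> M" using X unfolding Lat_def by auto
  have "S \<circ> X \<circ> R \<in> Alg (Lat A)"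
    unfolding Alg_def
  proof (intro CollectI conjI ballI)
    show "S \<circ> X \<circ> R \<in> BX" using S R X AB by (auto intro!: BX_comp)
    fix M assume M: "M \<in> Lat A"
    then have Mc: "closed_subspace M" unfolding Lat_def by auto
    have RM: "closed_subspace (R ` M)" by (rule cs_image[OF R S RS SR Mc])
    have "S ` R ` M = M" using SR by (force simp: image_comp)
    then have "R ` M \<in> Lat A" using colM[OF RM] M by simp
    then have "X ` R ` M \<subseteq> R ` M" by (rule XA)
    then have "S ` X ` R ` M \<subseteq> S ` R ` M" by auto
    then show "(S \<circ> X \<circ> R) ` M \<subseteq> M" using \<open>S ` R ` M = M\<close> by (simp add: image_comp)
  qed
  then show "S \<circ> X \<circ> R \<in> A" using refl by simp
  have "R \<circ> X \<circ> S \<in> Alg (Lat A)"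
    unfolding Alg_def
  proof (intro CollectI conjI ballI)
    show "R \<circ> X \<circ> S \<in> BX" using S R X AB by (auto intro!: BX_comp)
    fix M assume M: "M \<in> Lat A"
    then have Mc: "closed_subspace M" unfolding Lat_def by auto
    have "S ` M \<in> Lat A" using colM[OF Mc] M by simp
    then have "X ` S ` M \<subseteq> S ` M" by (rule XA)
    then have "R ` X ` S ` M \<subseteq> R ` S ` M" by auto
    moreover have "R ` S ` M = M" using RS by (force simp: image_comp)
    ultimately show "(R \<circ> X \<circ> S) ` M \<subseteq> M" by (simp add: image_comp)
  qed
  then show "R \<circ> X \<circ> S \<in> A" using refl by simp
qed

lemma conj_commutant:
  assumes cp: "conj_pres A S R" and S: "S \<in> BX" and R: "R \<in> BX"
    and SR: "\<And>x. S (R x) = x" and RS: "\<And>x. R (S x) = x"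
  shows "conj_pres (commutant A) S R"
  unfolding conj_pres_def
proof (intro ballI conjI)
  fix Y assume Y: "Y \<in> commutant A"
  then have YB: "Y \<in> BX" and Yc: "\<And>X x. X \<in> A \<Longrightarrow> Y (X x) = X (Y x)"
    unfolding commutant_def by (auto simp: fun_eq_iff)
  show "S \<circ> Y \<circ> R \<in> commutant A"
    unfolding commutant_def
  proof (intro CollectI conjI ballI)
    show "S \<circ> Y \<circ> R \<in> BX" using S R YB by (auto intro!: BX_comp)
    fix X assume X: "X \<in> A"
    have X': "R \<circ> X \<circ> S \<in> A" using cp X unfolding conj_pres_def by auto
    show "S \<circ> Y \<circ> R \<circ> X = X \<circ> (S \<circ> Y \<circ> R)"
    proof
      fix x
      have "X (R x) = R (S (X (R x)))" using RS by simp
      have "S (Y (R (X x))) = S (Y ((R \<circ> X \<circ> S) (R x)))" using SR by simp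
      also have "\<dots> = S ((R \<circ> X \<circ> S) (Y (R x)))" using Yc[OF X'] by simp
      also have "\<dots> = X (S (Y (R x)))" using SR by simp
      finally show "(S \<circ> Y \<circ> R \<circ> X) x = (X \<circ> (S \<circ> Y \<circ> R)) x" by simp
    qed
  qed
  show "R \<circ> Y \<circ> S \<in> commutant A"
    unfolding commutant_def
  proof (intro CollectI conjI ballI)
    show "R \<circ> Y \<circ> S \<in> BX" using S R YB by (auto intro!: BX_comp)
    fix X assume X: "X \<in> A"
    have X': "S \<circ> X \<circ> R \<in> A" using cp X unfolding conj_pres_def by auto
    show "R \<circ> Y \<circ> S \<circ> X = X \<circ> (R \<circ> Y \<circ> S)"
    proof
      fix x
      have "R (Y (S (X x))) = R (Y ((S \<circ> X \<circ> R) (S x)))" using RS by simp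
      also have "\<dots> = R ((S \<circ> X \<circ> R) (Y (S x)))" using Yc[OF X'] by simp
      also have "\<dots> = X (R (Y (S x)))" using RS by simp
      finally show "(R \<circ> Y \<circ> S \<circ> X) x = (X \<circ> (R \<circ> Y \<circ> S)) x" by simp
    qed
  qed
qed

lemma conj_Int: "conj_pres A S R \<Longrightarrow> conj_pres B S R \<Longrightarrow> conj_pres (A \<inter> B) S R"
  unfolding conj_pres_def by auto

lemma Alg_Lat_Alg_Lat: "Alg (Lat (Alg (Lat T))) = Alg (Lat T)"
proof
  show "Alg (Lat (Alg (Lat T))) \<subseteq> Alg (Lat T)"
  proof -
    have "Lat T \<subseteq> Lat (Alg (Lat T))" unfolding Lat_def Alg_def by auto
    then show ?thesis unfolding Alg_def by blast
  qed
  show "Alg (Lat T) \<subseteq> Alg (Lat (Alg (Lat T)))" unfolding Alg_def Lat_def by auto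
qed

lemma comm_sub: "U \<subseteq> BX \<Longrightarrow> U \<subseteq> commutant (commutant U)"
  unfolding commutant_def by auto

lemma comm_anti: "U \<subseteq> V \<Longrightarrow> commutant V \<subseteq> commutant U"
  unfolding commutant_def by auto

lemma comm3: "T \<subseteq> BX \<Longrightarrow> commutant (commutant (commutant T)) = commutant T"
proof
  assume "T \<subseteq> BX"
  then show "commutant (commutant (commutant T)) \<subseteq> commutant T"
    by (intro comm_anti comm_sub)
  show "commutant T \<subseteq> commutant (commutant (commutant T))"
    by (rule comm_sub) (auto simp: commutant_def)
qed

lemma col_transfer:
  assumes "Alg (Lat A) = A" and "S \<in> Col A" and "\<And>S R. conj_pres A S R \<Longrightarrow> S \<in> BX \<Longrightarrow> R \<in> BX \<Longrightarrow>
      (\<And>x. S (R x) = x) \<Longrightarrow> (\<And>x. R (S x) = x) \<Longrightarrow> conj_pres B S R"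
  shows "S \<in> Col B"
proof -
  have inv: "invertible_op S" using assms(2) unfolding Col_def by auto
  obtain R where S: "S \<in> BX" and R: "R \<in> BX" and SR: "\<And>x. S (R x) = x" and RS: "\<And>x. R (S x) = x"
    using inv_data[OF inv] by blast
  have "conj_pres A S R" by (rule col_conj[OF assms(1,2) S R SR RS])
  then have "conj_pres B S R" using assms(3) S R SR RS by blast
  then show ?thesis by (rule conj_col[OF inv S R SR RS])
qed

theorem corollary3p11:
  fixes \<T> :: "('a::complex_banach \<Rightarrow> 'a) set"
  assumes "\<T> \<subseteq> BX" and "\<T> \<noteq> {}"
  shows "Col (Alg (Lat \<T>)) \<subseteq> Col (Alg (Lat \<T>) \<inter> commutant (Alg (Lat \<T>)))
    \<and> (reflexive_algebra (commutant \<T>) \<and> reflexive_algebra (commutant (commutant \<T>))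
           \<longrightarrow> Col (commutant \<T>) = Col (commutant (commutant \<T>)))"
proof (intro conjI impI)
  show "Col (Alg (Lat \<T>)) \<subseteq> Col (Alg (Lat \<T>) \<inter> commutant (Alg (Lat \<T>)))"
  proof
    fix S assume "S \<in> Col (Alg (Lat \<T>))"
    then show "S \<in> Col (Alg (Lat \<T>) \<inter> commutant (Alg (Lat \<T>)))"
      by (rule col_transfer[OF Alg_Lat_Alg_Lat]) (blast intro: conj_Int conj_commutant)
  qed
next
  assume h: "reflexive_algebra (commutant \<T>) \<and> reflexive_algebra (commutant (commutant \<T>))"
  have r1: "Alg (Lat (commutant \<T>)) = commutant \<T>" using h unfolding reflexive_algebra_def by auto
  have r2: "Alg (Lat (commutant (commutant \<T>))) = commutant (commutant \<T>)"
    using h unfolding reflexive_algebra_def by auto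
  have c3: "commutant (commutant (commutant \<T>)) = commutant \<T>" by (rule comm3[OF assms(1)])
  show "Col (commutant \<T>) = Col (commutant (commutant \<T>))"
  proof
    show "Col (commutant \<T>) \<subseteq> Col (commutant (commutant \<T>))"
    proof
      fix S assume "S \<in> Col (commutant \<T>)"
      then show "S \<in> Col (commutant (commutant \<T>))"
        by (rule col_transfer[OF r1]) (blast intro: conj_commutant)
    qed
    show "Col (commutant (commutant \<T>)) \<subseteq> Col (commutant \<T>)"
    proof
      fix S assume "S \<in> Col (commutant (commutant \<T>))"
      then show "S \<in> Col (commutant \<T>)"
        by (rule col_transfer[OF r2]) (metis c3 conj_commutant)
    qed
  qed
qed

end
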